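(* Let $k>0$ be an integer and let $U_k$ be the random variable on $G(n,p)$ counting proper star $k$-separations. Then \[\mathbb E(U_k)=n\binom{n-1}{k}(1-p)^k\Big[\big(p+(1-p)^{k+1}\big)^{n-k-1}+\big(1-p^{n-k-1}\big)\big(1-(1-p)^{k(n-k-1)}\big)-1\Big].\]
   Context: $G(n,p)$ is the Erdős–Rényi random graph on vertex set $V$, $|V|=n$, each edge independently present with probability $p$. For a graph $\Delta$ with vertex set $W$, a separation is $S\subset W$ with $S\ne\varnothing$, $S\ne W$ and no edges between $S$ and $W\setminus S$. $\mathrm{st}(a)$ is $a$ with its neighbours. A star separation of $\Gamma$ is a pair $(a,S)$ with $a\in V$, $S\subset V\setminus\mathrm{st}(a)$, such that $S$ is a separation of the full subgraph $\Gamma\setminus\mathrm{st}(a)$; it is a star $k$-separation if $|S|=k$, and it is proper if $S$ is not a separation of $\Gamma$ itself. *)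

theory Defs
  imports Complex_Main
begin

text \<open>Graphs on the vertex set V = {..<n}, given by their edge sets
  (sets of 2-element subsets of V).\<close>

definition all_edges :: "nat \<Rightarrow> nat set set" where
  "all_edges n = {e. \<exists>u v. u < n \<and> v < n \<and> u \<noteq> v \<and> e = {u, v}}"

definition gnp_prob :: "nat \<Rightarrow> real \<Rightarrow> nat set set \<Rightarrow> real" where
  "gnp_prob n p E = p ^ card E * (1 - p) ^ (card (all_edges n) - card E)"

definition gnp_expectation :: "nat \<Rightarrow> real \<Rightarrow> (nat set set \<Rightarrow> real) \<Rightarrow> real" where
  "gnp_expectation n p f = (\<Sum>E\<in>Pow (all_edges n). gnp_prob n p E * f E)"

definition st :: "nat \<Rightarrow> nat set set \<Rightarrow> nat \<Rightarrow> nat set" where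
  "st n E a = insert a {v. v < n \<and> {a, v} \<in> E}"

definition is_separation :: "nat set set \<Rightarrow> nat set \<Rightarrow> nat set \<Rightarrow> bool" where
  "is_separation E W S \<longleftrightarrow> S \<subseteq> W \<and> S \<noteq> {} \<and> S \<noteq> W \<and>
     (\<forall>u\<in>S. \<forall>v\<in>W - S. {u, v} \<notin> E)"

definition star_separation :: "nat \<Rightarrow> nat set set \<Rightarrow> nat \<Rightarrow> nat set \<Rightarrow> bool" where
  "star_separation n E a S \<longleftrightarrow> a < n \<and> S \<subseteq> {..<n} - st n E a \<and>
     is_separation E ({..<n} - st n E a) S"

definition proper_star_k_separation :: "nat \<Rightarrow> nat set set \<Rightarrow> nat \<Rightarrow> nat \<Rightarrow> nat set \<Rightarrow> bool" where
  "proper_star_k_separation n E k a S \<longleftrightarrow> star_separation n E a S \<and> card S = k \<and>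
     \<not> is_separation E {..<n} S"

definition U :: "nat \<Rightarrow> nat \<Rightarrow> nat set set \<Rightarrow> nat" where
  "U n k E = card {(a, S). proper_star_k_separation n E k a S}"

end

theory Submission
  imports Defs
begin


definition wt :: "real \<Rightarrow> 'a set \<Rightarrow> 'a set \<Rightarrow> real" where
  "wt p A E = (\<Prod>e\<in>A. if e \<in> E then p else 1 - p)"

lemma wt_union:
  assumes "finite A" "finite B" "A \<inter> B = {}" "X \<subseteq> A" "Y \<subseteq> B"
  shows "wt p (A \<union> B) (X \<union> Y) = wt p A X * wt p B Y"
proof -
  have "wt p (A \<union> B) (X \<union> Y) = (\<Prod>e\<in>A. if e \<in> X \<union> Y then p else 1 - p) * (\<Prod>e\<in>B. if e \<in> X \<union> Y then p else 1 - p)"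
    unfolding wt_def using assms by (simp add: prod.union_disjoint)
  also have "(\<Prod>e\<in>A. if e \<in> X \<union> Y then p else 1 - p) = wt p A X"
    unfolding wt_def by (rule prod.cong) (use assms in auto)
  also have "(\<Prod>e\<in>B. if e \<in> X \<union> Y then p else 1 - p) = wt p B Y"
    unfolding wt_def by (rule prod.cong) (use assms in auto)
  finally show ?thesis .
qed

lemma fact2:
  assumes "finite A" "finite B" "A \<inter> B = {}"
  shows "(\<Sum>E\<in>Pow (A \<union> B). wt p (A \<union> B) E * (f (E \<inter> A) * g (E \<inter> B))) =
     (\<Sum>X\<in>Pow A. wt p A X * f X) * (\<Sum>Y\<in>Pow B. wt p B Y * g Y)"
proof -
  have bij: "bij_betw (\<lambda>(X,Y). X \<union> Y) (Pow A \<times> Pow B) (Pow (A \<union> B))"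
    by (rule bij_betw_byWitness[where f'="\<lambda>E. (E \<inter> A, E \<inter> B)"]) (use assms in auto)
  have "(\<Sum>X\<in>Pow A. wt p A X * f X) * (\<Sum>Y\<in>Pow B. wt p B Y * g Y)
      = (\<Sum>(X,Y)\<in>Pow A \<times> Pow B. (wt p A X * f X) * (wt p B Y * g Y))"
    by (simp add: sum_product sum.cartesian_product)
  also have "\<dots> = (\<Sum>(X,Y)\<in>Pow A \<times> Pow B. wt p (A \<union> B) (X \<union> Y) * (f ((X \<union> Y) \<inter> A) * g ((X \<union> Y) \<inter> B)))"
  proof (rule sum.cong[OF refl])
    fix x assume x: "x \<in> Pow A \<times> Pow B"
    obtain X Y where xe: "x = (X,Y)" by fastforce
    have h: "X \<subseteq> A" "Y \<subseteq> B" using x xe by auto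
    have "(X \<union> Y) \<inter> A = X" "(X \<union> Y) \<inter> B = Y" using h assms by auto
    then show "(case x of (X,Y) \<Rightarrow> wt p A X * f X * (wt p B Y * g Y)) = (case x of (X,Y) \<Rightarrow> wt p (A \<union> B) (X \<union> Y) * (f ((X \<union> Y) \<inter> A) * g ((X \<union> Y) \<inter> B)))"
      using wt_union[OF assms h] xe by simp
  qed
  also have "\<dots> = (\<Sum>E\<in>Pow (A \<union> B). wt p (A \<union> B) E * (f (E \<inter> A) * g (E \<inter> B)))"
    using sum.reindex_bij_betw[OF bij, of "\<lambda>E. wt p (A \<union> B) E * (f (E \<inter> A) * g (E \<inter> B))"]
    by (simp add: case_prod_unfold)
  finally show ?thesis by simp
qed

lemma factN:
  assumes "finite I" "\<forall>i\<in>I. finite (A i)" "\<forall>i\<in>I. \<forall>j\<in>I. i \<noteq> j \<longrightarrow> A i \<inter> A j = {}"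
  shows "(\<Sum>E\<in>Pow (\<Union>(A ` I)). wt p (\<Union>(A ` I)) E * (\<Prod>i\<in>I. f i (E \<inter> A i))) =
     (\<Prod>i\<in>I. \<Sum>X\<in>Pow (A i). wt p (A i) X * f i X)"
  using assms
proof (induction I rule: finite_induct)
  case empty
  then show ?case by (simp add: wt_def)
next
  case (insert i I)
  let ?U = "\<Union>(A ` I)"
  have dj: "A i \<inter> ?U = {}" using insert.prems(2) insert.hyps(2)
    by fastforce
  have fin: "finite (A i)" "finite ?U" using insert by auto
  have IH: "(\<Sum>E\<in>Pow ?U. wt p ?U E * (\<Prod>j\<in>I. f j (E \<inter> A j))) =
     (\<Prod>j\<in>I. \<Sum>X\<in>Pow (A j). wt p (A j) X * f j X)"
    using insert by auto
  have eq: "\<And>E. (\<Prod>j\<in>insert i I. f j (E \<inter> A j)) = f i (E \<inter> A i) * (\<lambda>F. \<Prod>j\<in>I. f j (F \<inter> A j)) (E \<inter> ?U)"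
  proof -
    fix E
    have "(\<Prod>j\<in>I. f j (E \<inter> A j)) = (\<Prod>j\<in>I. f j ((E \<inter> ?U) \<inter> A j))"
    proof (rule prod.cong[OF refl])
      fix j assume "j \<in> I"
      then have "E \<inter> ?U \<inter> A j = E \<inter> A j" by auto
      then show "f j (E \<inter> A j) = f j (E \<inter> ?U \<inter> A j)" by simp
    qed
    then show "?thesis E" using insert.hyps by simp
  qed
  have "\<Union>(A ` insert i I) = A i \<union> ?U" by simp
  then have "(\<Sum>E\<in>Pow (\<Union>(A ` insert i I)). wt p (\<Union>(A ` insert i I)) E * (\<Prod>j\<in>insert i I. f j (E \<inter> A j)))
     = (\<Sum>E\<in>Pow (A i \<union> ?U). wt p (A i \<union> ?U) E * (f i (E \<inter> A i) * (\<lambda>F. \<Prod>j\<in>I. f j (F \<inter> A j)) (E \<inter> ?U)))"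
    using eq by simp
  also have "\<dots> = (\<Sum>X\<in>Pow (A i). wt p (A i) X * f i X) * (\<Sum>E\<in>Pow ?U. wt p ?U E * (\<Prod>j\<in>I. f j (E \<inter> A j)))"
    by (rule fact2[OF fin dj])
  also have "\<dots> = (\<Prod>j\<in>insert i I. \<Sum>X\<in>Pow (A j). wt p (A j) X * f j X)"
    using IH insert.hyps by simp
  finally show ?case .
qed

lemma wt_single_sum: "(\<Sum>X\<in>Pow {e}. wt p {e} X * f X) = (1 - p) * f {} + p * f {e}"
proof -
  have "Pow {e} = {{}, {e}}" by auto
  then show ?thesis by (simp add: wt_def)
qed

lemma wt_sum1: "finite A \<Longrightarrow> (\<Sum>X\<in>Pow A. wt p A X) = 1"
proof (induction A rule: finite_induct)
  case empty then show ?case by (simp add: wt_def)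
next
  case (insert e A)
  have "insert e A = {e} \<union> A" by simp
  have "(\<Sum>X\<in>Pow ({e} \<union> A). wt p ({e} \<union> A) X * ((\<lambda>_. 1) (X \<inter> {e}) * (\<lambda>_. 1) (X \<inter> A)))
     = (\<Sum>X\<in>Pow {e}. wt p {e} X * 1) * (\<Sum>X\<in>Pow A. wt p A X * 1)"
    by (rule fact2) (use insert in auto)
  then show ?case using insert wt_single_sum[of p e "\<lambda>_. 1"] by simp
qed

lemma wt_delta: "finite A \<Longrightarrow> G \<subseteq> A \<Longrightarrow> (\<Sum>X\<in>Pow A. wt p A X * of_bool (X = G)) = wt p A G"
proof -
  assume "finite A" "G \<subseteq> A"
  have "(\<Sum>X\<in>Pow A. wt p A X * of_bool (X = G)) = (\<Sum>X\<in>Pow A. if X = G then wt p A X else 0)"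
    by (rule sum.cong) auto
  then show ?thesis using \<open>finite A\<close> \<open>G \<subseteq> A\<close> by (simp add: sum.delta')
qed

lemma wt_empty: "finite A \<Longrightarrow> wt p A {} = (1 - p) ^ card A"
  by (simp add: wt_def)

lemma wt_sing: "finite C \<Longrightarrow> e \<notin> C \<Longrightarrow> wt p (insert e C) {e} = p * (1 - p) ^ card C"
proof -
  assume a: "finite C" "e \<notin> C"
  have "(\<Prod>x\<in>C. if x \<in> {e} then p else 1 - p) = (\<Prod>x\<in>C. 1 - p)"
    by (rule prod.cong) (use a in auto)
  then show ?thesis using a by (simp add: wt_def)
qed

lemma bs_in: assumes "finite C" "e \<notin> C"
  shows "(\<Sum>X\<in>Pow (insert e C). wt p (insert e C) X * of_bool (e \<in> X)) = p"
proof -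
  have "(\<Sum>X\<in>Pow ({e} \<union> C). wt p ({e} \<union> C) X * ((\<lambda>F. of_bool (e \<in> F)) (X \<inter> {e}) * (\<lambda>_. 1) (X \<inter> C)))
     = (\<Sum>X\<in>Pow {e}. wt p {e} X * of_bool (e \<in> X)) * (\<Sum>X\<in>Pow C. wt p C X * 1)"
    by (rule fact2) (use assms in auto)
  then show ?thesis using assms wt_single_sum[of p e "\<lambda>F. of_bool (e \<in> F)"] wt_sum1[of C p] by simp
qed

lemma bs_empty: assumes "finite C" "e \<notin> C"
  shows "(\<Sum>X\<in>Pow (insert e C). wt p (insert e C) X * of_bool (X = {})) = (1 - p) ^ (card C + 1)"
  using wt_delta[of "insert e C" "{}" p] wt_empty[of "insert e C" p] assms by simp

lemma bs_sing: assumes "finite C" "e \<notin> C"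
  shows "(\<Sum>X\<in>Pow (insert e C). wt p (insert e C) X * of_bool (X = {e})) = p * (1 - p) ^ card C"
  using wt_delta[of "insert e C" "{e}" p] wt_sing[of C e p] assms by simp

lemma gnp_wt: "E \<subseteq> all_edges n \<Longrightarrow> finite (all_edges n) \<Longrightarrow> gnp_prob n p E = wt p (all_edges n) E"
proof -
  assume a: "E \<subseteq> all_edges n" "finite (all_edges n)"
  have "wt p (all_edges n) E = (\<Prod>e\<in>all_edges n \<inter> {x. x \<in> E}. p) * (\<Prod>e\<in>all_edges n \<inter> - {x. x \<in> E}. 1 - p)"
    unfolding wt_def by (rule prod.If_cases) (rule a(2))
  also have "all_edges n \<inter> {x. x \<in> E} = E" using a by auto
  also have "all_edges n \<inter> - {x. x \<in> E} = all_edges n - E" by auto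
  finally show ?thesis using a unfolding gnp_prob_def
    by (simp add: card_Diff_subset finite_subset)
qed

lemma fin_all: "finite (all_edges n)"
proof -
  have "all_edges n \<subseteq> Pow {..<n}" unfolding all_edges_def by auto
  then show ?thesis by (rule finite_subset) simp
qed



lemma charac:
  assumes "S \<noteq> {}" "a < n" "S \<subseteq> {..<n} - {a}" "card S = k"
  shows "proper_star_k_separation n E k a S \<longleftrightarrow>
    (\<forall>s\<in>S. {a,s} \<notin> E) \<and>
    (\<forall>v\<in>{..<n} - insert a S. {a,v} \<in> E \<or> (\<forall>s\<in>S. {s,v} \<notin> E)) \<and>
    (\<exists>v\<in>{..<n} - insert a S. {a,v} \<notin> E) \<and>
    (\<exists>v\<in>{..<n} - insert a S. {a,v} \<in> E \<and> (\<exists>s\<in>S. {s,v} \<in> E))"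
    (is "?L \<longleftrightarrow> ?P0 \<and> ?P1 \<and> ?P2 \<and> ?P3")
proof
  assume L: ?L
  let ?W = "{..<n} - st n E a"
  have sub: "S \<subseteq> ?W" and sep: "is_separation E ?W S" and nsep: "\<not> is_separation E {..<n} S"
    using L unfolding proper_star_k_separation_def star_separation_def by auto
  have p0: ?P0
  proof
    fix s assume "s \<in> S" then have "s \<in> ?W" using sub by auto
    then show "{a,s} \<notin> E" unfolding st_def by auto
  qed
  have memW: "\<And>v. v \<in> ?W - S \<longleftrightarrow> v \<in> {..<n} - insert a S \<and> {a,v} \<notin> E"
    unfolding st_def by auto
  have p1: ?P1
  proof
    fix v assume v: "v \<in> {..<n} - insert a S"
    show "{a,v} \<in> E \<or> (\<forall>s\<in>S. {s,v} \<notin> E)"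
    proof (cases "{a,v} \<in> E")
      case False
      then have "v \<in> ?W - S" using memW v by blast
      then show ?thesis using sep unfolding is_separation_def by blast
    qed simp
  qed
  have p2: ?P2
  proof -
    have "S \<noteq> ?W" using sep unfolding is_separation_def by blast
    then obtain v where "v \<in> ?W - S" using sub by blast
    then show ?thesis using memW by blast
  qed
  have p3: ?P3
  proof -
    have "S \<subseteq> {..<n}" "S \<noteq> {..<n}" using assms by auto
    then obtain s u where su: "s \<in> S" "u \<in> {..<n} - S" "{s,u} \<in> E"
      using nsep assms(1) unfolding is_separation_def by blast
    have "u \<noteq> a" using su p0 by (auto simp: insert_commute)
    then have u: "u \<in> {..<n} - insert a S" using su by auto
    have "{a,u} \<in> E" using p1 u su by blast
    then show ?thesis using u su by blast
  qed
  show "?P0 \<and> ?P1 \<and> ?P2 \<and> ?P3" using p0 p1 p2 p3 by blast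
next
  assume R: "?P0 \<and> ?P1 \<and> ?P2 \<and> ?P3"
  let ?W = "{..<n} - st n E a"
  have memW: "\<And>v. v \<in> ?W - S \<longleftrightarrow> v \<in> {..<n} - insert a S \<and> {a,v} \<notin> E"
    unfolding st_def by auto
  have sub: "S \<subseteq> ?W" using R assms unfolding st_def by auto
  have sep: "is_separation E ?W S"
    unfolding is_separation_def
  proof (intro conjI)
    show "S \<subseteq> ?W" by (rule sub)
    show "S \<noteq> {}" by (rule assms(1))
    show "S \<noteq> ?W" using R memW by blast
    show "\<forall>u\<in>S. \<forall>v\<in>?W - S. {u, v} \<notin> E" using R memW by blast
  qed
  have nsep: "\<not> is_separation E {..<n} S"
    using R unfolding is_separation_def by blast
  show ?L unfolding proper_star_k_separation_def star_separation_def
    using sub sep nsep assms by blast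
qed



lemma prod_of_bool_all: "finite T \<Longrightarrow> (\<Prod>v\<in>T. (of_bool (Q v) :: real)) = of_bool (\<forall>v\<in>T. Q v)"
  by (induction T rule: finite_induct) auto

lemma disj_blocks:
  fixes a :: nat
  assumes aS: "a \<notin> S" and T: "T = {..<n} - insert a S"
  and Ab: "\<And>i. Ab i = (if i = a then (\<lambda>s. {a,s}) ` S else insert {a,i} ((\<lambda>s. {s,i}) ` S))"
  shows "\<forall>i\<in>insert a T. \<forall>j\<in>insert a T. i \<noteq> j \<longrightarrow> Ab i \<inter> Ab j = {}"
proof (intro ballI impI)
  fix i j assume i: "i \<in> insert a T" and j: "j \<in> insert a T" and ij: "i \<noteq> j"
  have key: "Ab x \<inter> Ab y = {}" if x: "x = a \<or> (x \<in> T)" and y: "y \<in> T" and xy: "x \<noteq> y" for x y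
  proof (rule ccontr)
    assume "Ab x \<inter> Ab y \<noteq> {}"
    then obtain e where ex: "e \<in> Ab x" and ey: "e \<in> Ab y" by blast
    have ya: "y \<noteq> a" "y \<notin> S" using y T by auto
    from ey ya obtain t where et: "e = {a,y} \<or> (t \<in> S \<and> e = {t,y})" using Ab[of y] by auto
    show False
    proof (cases "x = a")
      case True
      then obtain s where "s \<in> S" "e = {a,s}" using ex Ab[of x] by auto
      then show False using et ya aS xy True by (auto simp: doubleton_eq_iff)
    next
      case False
      then have xT: "x \<in> T" using x by auto
      then have xa: "x \<noteq> a" "x \<notin> S" using T by auto
      obtain s where es: "e = {a,x} \<or> (s \<in> S \<and> e = {s,x})" using ex Ab[of x] xa by auto
      show False using es et ya xa aS xy by (auto simp: doubleton_eq_iff)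
    qed
  qed
  show "Ab i \<inter> Ab j = {}"
  proof (cases "j = a")
    case True
    then have "i \<in> T" using i ij by auto
    then show ?thesis using key[of j i] True ij by auto
  next
    case False
    then have "j \<in> T" using j by auto
    then show ?thesis using key[of i j] i ij by auto
  qed
qed

lemma prob_one:
  assumes k: "k > 0" and a: "a < n" and S: "S \<subseteq> {..<n} - {a}" "card S = k"
  shows "(\<Sum>E\<in>Pow (all_edges n). wt p (all_edges n) E * of_bool (proper_star_k_separation n E k a S)) =
    (1 - p) ^ k * ((p + (1 - p) ^ (k + 1)) ^ (n - k - 1) - p ^ (n - k - 1)
       - (p * (1 - p) ^ k + (1 - p) ^ (k + 1)) ^ (n - k - 1) + (p * (1 - p) ^ k) ^ (n - k - 1))"
proof -
  define T where "T = {..<n} - insert a S"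
  define I where "I = insert a T"
  define Ab where "Ab i = (if i = a then (\<lambda>s. {a,s}) ` S else insert {a,i} ((\<lambda>s. {s,i}) ` S))" for i
  define U where "U = \<Union>(Ab ` I)"
  define m where "m = n - k - 1"
  have finS: "finite S" using S by (meson finite_lessThan finite_subset Diff_subset subset_trans)
  have Sne: "S \<noteq> {}" using k S finS by auto
  have finT: "finite T" unfolding T_def by simp
  have aT: "a \<notin> T" unfolding T_def by simp
  have aS: "a \<notin> S" using S by auto
  have cardT: "card T = m"
  proof -
    have "insert a S \<subseteq> {..<n}" using S a by auto
    then have "card T = n - card (insert a S)" unfolding T_def by (simp add: card_Diff_subset finS)
    then show ?thesis using S aS finS unfolding m_def by simp
  qed
  have finI: "finite I" unfolding I_def using finT by simp
  have finAb: "\<forall>i\<in>I. finite (Ab i)" unfolding Ab_def using finS by auto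
  have disj: "\<forall>i\<in>I. \<forall>j\<in>I. i \<noteq> j \<longrightarrow> Ab i \<inter> Ab j = {}"
    unfolding I_def by (rule disj_blocks[OF aS T_def Ab_def])
  have Uall: "U \<subseteq> all_edges n"
    unfolding U_def I_def Ab_def T_def all_edges_def using S a by auto
  have finU: "finite U" using finI finAb unfolding U_def by auto
  have eC: "\<And>v. v \<in> T \<Longrightarrow> {a,v} \<notin> (\<lambda>s. {s,v}) ` S"
    unfolding T_def using aS by (auto simp: doubleton_eq_iff)
  have cardC: "\<And>v. v \<in> T \<Longrightarrow> card ((\<lambda>s. {s,v}) ` S) = k"
  proof -
    fix v assume "v \<in> T"
    then have "inj_on (\<lambda>s. {s,v}) S" unfolding T_def by (auto simp: inj_on_def doubleton_eq_iff)
    then show "card ((\<lambda>s. {s,v}) ` S) = k" using S by (simp add: card_image)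
  qed
  have cardA: "card ((\<lambda>s. {a,s}) ` S) = k"
  proof -
    have "inj_on (\<lambda>s. {a,s}) S" by (auto simp: inj_on_def doubleton_eq_iff)
    then show ?thesis using S by (simp add: card_image)
  qed
  have AbT: "\<And>v. v \<in> T \<Longrightarrow> Ab v = insert {a,v} ((\<lambda>s. {s,v}) ` S)" unfolding Ab_def using aT by auto
  have Aba: "Ab a = (\<lambda>s. {a,s}) ` S" unfolding Ab_def by simp
  define h :: "nat \<Rightarrow> nat \<Rightarrow> nat set set \<Rightarrow> real" where "h j i F = (if i = a then of_bool (F = {}) else
      (if j = (1::nat) then of_bool ({a,i} \<in> F) + of_bool (F = {})
       else if j = 2 then of_bool ({a,i} \<in> F)
       else if j = 3 then of_bool (F = {{a,i}}) + of_bool (F = {})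
       else of_bool (F = {{a,i}})))" for j i F
  define Q where "Q F = (\<Prod>i\<in>I. h 1 i (F \<inter> Ab i)) - (\<Prod>i\<in>I. h 2 i (F \<inter> Ab i))
      - (\<Prod>i\<in>I. h 3 i (F \<inter> Ab i)) + (\<Prod>i\<in>I. h 4 i (F \<inter> Ab i))" for F
  have ind: "of_bool (proper_star_k_separation n E k a S) = Q (E \<inter> U)" for E
  proof -
    have loc0: "E \<inter> Ab a = {} \<longleftrightarrow> (\<forall>s\<in>S. {a,s} \<notin> E)" using Aba by auto
    have locN: "\<And>v. v \<in> T \<Longrightarrow> {a,v} \<in> E \<inter> Ab v \<longleftrightarrow> {a,v} \<in> E" using AbT by auto
    have locZ: "\<And>v. v \<in> T \<Longrightarrow> E \<inter> Ab v = {} \<longleftrightarrow> {a,v} \<notin> E \<and> (\<forall>s\<in>S. {s,v} \<notin> E)" using AbT by auto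
    have locX: "\<And>v. v \<in> T \<Longrightarrow> E \<inter> Ab v = {{a,v}} \<longleftrightarrow> {a,v} \<in> E \<and> (\<forall>s\<in>S. {s,v} \<notin> E)"
    proof -
      fix v assume v: "v \<in> T"
      have nin: "{a,v} \<notin> (\<lambda>s. {s,v}) ` S" using v by (rule eC)
      have g: "E \<inter> insert x C = {x} \<longleftrightarrow> x \<in> E \<and> E \<inter> C = {}" if "x \<notin> C" for x :: "nat set" and C
        using that by auto
      have h2: "E \<inter> (\<lambda>s. {s,v}) ` S = {} \<longleftrightarrow> (\<forall>s\<in>S. {s,v} \<notin> E)" by auto
      show "E \<inter> Ab v = {{a,v}} \<longleftrightarrow> {a,v} \<in> E \<and> (\<forall>s\<in>S. {s,v} \<notin> E)"
        unfolding AbT[OF v] g[OF nin] h2 ..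
    qed
    have EU: "\<And>i. i \<in> I \<Longrightarrow> E \<inter> U \<inter> Ab i = E \<inter> Ab i" unfolding U_def by auto
    define P0 where "P0 = (\<forall>s\<in>S. {a,s} \<notin> E)"
    have pj: "(\<Prod>i\<in>I. h j i (E \<inter> U \<inter> Ab i)) = of_bool P0 * (\<Prod>v\<in>T. h j v (E \<inter> Ab v))" for j
    proof -
      have "(\<Prod>i\<in>I. h j i (E \<inter> U \<inter> Ab i)) = (\<Prod>i\<in>I. h j i (E \<inter> Ab i))"
        by (rule prod.cong) (auto simp: EU)
      also have "\<dots> = h j a (E \<inter> Ab a) * (\<Prod>v\<in>T. h j v (E \<inter> Ab v))"
        unfolding I_def using finT aT by simp
      also have "h j a (E \<inter> Ab a) = of_bool P0" unfolding h_def P0_def using loc0 by simp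
      finally show ?thesis .
    qed
    have p1: "(\<Prod>v\<in>T. h 1 v (E \<inter> Ab v)) = of_bool (\<forall>v\<in>T. {a,v} \<in> E \<or> (\<forall>s\<in>S. {s,v} \<notin> E))"
    proof -
      have "(\<Prod>v\<in>T. h 1 v (E \<inter> Ab v)) = (\<Prod>v\<in>T. of_bool ({a,v} \<in> E \<or> (\<forall>s\<in>S. {s,v} \<notin> E)))"
        by (rule prod.cong) (use aT locN locZ in \<open>auto simp: h_def\<close>)
      then show ?thesis by (simp only: prod_of_bool_all[OF finT])
    qed
    have p2: "(\<Prod>v\<in>T. h 2 v (E \<inter> Ab v)) = of_bool (\<forall>v\<in>T. {a,v} \<in> E)"
    proof -
      have "(\<Prod>v\<in>T. h 2 v (E \<inter> Ab v)) = (\<Prod>v\<in>T. of_bool ({a,v} \<in> E))"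
        by (rule prod.cong) (use aT locN in \<open>auto simp: h_def\<close>)
      then show ?thesis by (simp only: prod_of_bool_all[OF finT])
    qed
    have p3: "(\<Prod>v\<in>T. h 3 v (E \<inter> Ab v)) = of_bool (\<forall>v\<in>T. (\<forall>s\<in>S. {s,v} \<notin> E))"
    proof -
      have "(\<Prod>v\<in>T. h 3 v (E \<inter> Ab v)) = (\<Prod>v\<in>T. of_bool (\<forall>s\<in>S. {s,v} \<notin> E))"
      proof (rule prod.cong[OF refl])
        fix v assume v: "v \<in> T"
        have "v \<noteq> a" using v aT by auto
        then show "h 3 v (E \<inter> Ab v) = of_bool (\<forall>s\<in>S. {s,v} \<notin> E)"
          unfolding h_def using locX[OF v] locZ[OF v] by auto
      qed
      then show ?thesis by (simp only: prod_of_bool_all[OF finT])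
    qed
    have p4: "(\<Prod>v\<in>T. h 4 v (E \<inter> Ab v)) = of_bool (\<forall>v\<in>T. {a,v} \<in> E \<and> (\<forall>s\<in>S. {s,v} \<notin> E))"
    proof -
      have "(\<Prod>v\<in>T. h 4 v (E \<inter> Ab v)) = (\<Prod>v\<in>T. of_bool ({a,v} \<in> E \<and> (\<forall>s\<in>S. {s,v} \<notin> E)))"
      proof (rule prod.cong[OF refl])
        fix v assume v: "v \<in> T"
        have "v \<noteq> a" using v aT by auto
        then show "h 4 v (E \<inter> Ab v) = of_bool ({a,v} \<in> E \<and> (\<forall>s\<in>S. {s,v} \<notin> E))"
          unfolding h_def using locX[OF v] by auto
      qed
      then show ?thesis by (simp only: prod_of_bool_all[OF finT])
    qed
    define al where "al = (\<forall>v\<in>T. {a,v} \<in> E \<or> (\<forall>s\<in>S. {s,v} \<notin> E))"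
    define be where "be = (\<forall>v\<in>T. {a,v} \<in> E)"
    define ga where "ga = (\<forall>v\<in>T. (\<forall>s\<in>S. {s,v} \<notin> E))"
    define de where "de = (\<forall>v\<in>T. {a,v} \<in> E \<and> (\<forall>s\<in>S. {s,v} \<notin> E))"
    have ch: "proper_star_k_separation n E k a S \<longleftrightarrow> P0 \<and> al \<and> \<not> be \<and> \<not> ga"
    proof -
      have c: "proper_star_k_separation n E k a S \<longleftrightarrow>
        P0 \<and> al \<and> (\<exists>v\<in>T. {a,v} \<notin> E) \<and> (\<exists>v\<in>T. {a,v} \<in> E \<and> (\<exists>s\<in>S. {s,v} \<in> E))"
        unfolding charac[OF Sne a S] P0_def al_def T_def ..
      have "al \<Longrightarrow> (\<exists>v\<in>T. {a,v} \<in> E \<and> (\<exists>s\<in>S. {s,v} \<in> E)) \<longleftrightarrow> \<not> ga"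
        unfolding al_def ga_def by auto
      moreover have "(\<exists>v\<in>T. {a,v} \<notin> E) \<longleftrightarrow> \<not> be" unfolding be_def by auto
      ultimately show ?thesis using c by auto
    qed
    have r1: "be \<longrightarrow> al" "ga \<longrightarrow> al" "de \<longleftrightarrow> be \<and> ga"
      unfolding al_def be_def ga_def de_def by auto
    have "Q (E \<inter> U) = of_bool P0 * (of_bool al - of_bool be - of_bool ga + of_bool de)"
      unfolding Q_def pj p1 p2 p3 p4 al_def[symmetric] be_def[symmetric] ga_def[symmetric] de_def[symmetric]
      by (simp only: right_diff_distrib distrib_left)
    also have "\<dots> = of_bool (P0 \<and> al \<and> \<not> be \<and> \<not> ga)"
      using r1 by (cases P0; cases al; cases be; cases ga; cases de) auto
    finally show ?thesis using ch by simp
  qed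
  define bs where "bs j i = (\<Sum>X\<in>Pow (Ab i). wt p (Ab i) X * h j i X)" for j i
  have bsa: "bs j a = (1 - p) ^ k" for j
  proof -
    have "bs j a = (\<Sum>X\<in>Pow (Ab a). wt p (Ab a) X * of_bool (X = {}))"
      unfolding bs_def h_def by simp
    also have "\<dots> = (1 - p) ^ k"
      using wt_delta[of "Ab a" "{}" p] wt_empty[of "Ab a" p] Aba cardA finS by simp
    finally show ?thesis .
  qed
  have bsv: "bs 1 v = p + (1 - p) ^ (k + 1)" "bs 2 v = p"
    "bs 3 v = p * (1 - p) ^ k + (1 - p) ^ (k + 1)" "bs 4 v = p * (1 - p) ^ k" if v: "v \<in> T" for v
  proof -
    define C where "C = (\<lambda>s. {s,v}) ` S"
    define e where "e = {a,v}"
    have va: "v \<noteq> a" using v aT by auto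
    have fC: "finite C" "e \<notin> C" "card C = k" using finS eC[OF v] cardC[OF v] unfolding C_def e_def by auto
    have Abv: "Ab v = insert e C" using AbT[OF v] unfolding C_def e_def by simp
    have i1: "(\<Sum>X\<in>Pow (insert e C). wt p (insert e C) X * of_bool (e \<in> X)) = p" by (rule bs_in[OF fC(1,2)])
    have i2: "(\<Sum>X\<in>Pow (insert e C). wt p (insert e C) X * of_bool (X = {})) = (1 - p) ^ (k + 1)"
      using bs_empty[OF fC(1,2)] fC(3) by simp
    have i3: "(\<Sum>X\<in>Pow (insert e C). wt p (insert e C) X * of_bool (X = {e})) = p * (1 - p) ^ k"
      using bs_sing[OF fC(1,2)] fC(3) by simp
    have "bs 1 v = (\<Sum>X\<in>Pow (insert e C). wt p (insert e C) X * of_bool (e \<in> X) + wt p (insert e C) X * of_bool (X = {}))"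
      unfolding bs_def h_def Abv using va by (simp add: e_def algebra_simps)
    then show "bs 1 v = p + (1 - p) ^ (k + 1)" using i1 i2 by (simp add: sum.distrib)
    show "bs 2 v = p" unfolding bs_def h_def Abv using va i1 by (simp add: e_def)
    have "bs 3 v = (\<Sum>X\<in>Pow (insert e C). wt p (insert e C) X * of_bool (X = {e}) + wt p (insert e C) X * of_bool (X = {}))"
      unfolding bs_def h_def Abv using va by (simp add: e_def algebra_simps)
    then show "bs 3 v = p * (1 - p) ^ k + (1 - p) ^ (k + 1)" using i3 i2 by (simp add: sum.distrib)
    show "bs 4 v = p * (1 - p) ^ k" unfolding bs_def h_def Abv using va i3 by (simp add: e_def)
  qed
  have fj: "(\<Sum>X\<in>Pow U. wt p U X * (\<Prod>i\<in>I. h j i (X \<inter> Ab i))) = (1 - p) ^ k * bs j (SOME v. v \<in> T) ^ m"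
    if cst: "\<forall>v\<in>T. bs j v = bs j (SOME v. v \<in> T)" for j
  proof -
    have "(\<Sum>X\<in>Pow U. wt p U X * (\<Prod>i\<in>I. h j i (X \<inter> Ab i))) = (\<Prod>i\<in>I. bs j i)"
      unfolding U_def bs_def by (rule factN[OF finI finAb disj])
    also have "\<dots> = bs j a * (\<Prod>v\<in>T. bs j v)" unfolding I_def using finT aT by simp
    also have "(\<Prod>v\<in>T. bs j v) = (\<Prod>v\<in>T. bs j (SOME v. v \<in> T))" by (rule prod.cong) (use cst in auto)
    finally show ?thesis using bsa cardT by simp
  qed
  have sumQ: "(\<Sum>X\<in>Pow U. wt p U X * Q X) =
      (\<Sum>X\<in>Pow U. wt p U X * (\<Prod>i\<in>I. h 1 i (X \<inter> Ab i))) - (\<Sum>X\<in>Pow U. wt p U X * (\<Prod>i\<in>I. h 2 i (X \<inter> Ab i)))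
      - (\<Sum>X\<in>Pow U. wt p U X * (\<Prod>i\<in>I. h 3 i (X \<inter> Ab i))) + (\<Sum>X\<in>Pow U. wt p U X * (\<Prod>i\<in>I. h 4 i (X \<inter> Ab i)))"
    unfolding Q_def by (simp add: ring_distribs sum.distrib sum_subtractf)
  have main: "(\<Sum>X\<in>Pow U. wt p U X * Q X) = (1 - p) ^ k * ((p + (1 - p) ^ (k + 1)) ^ m - p ^ m
       - (p * (1 - p) ^ k + (1 - p) ^ (k + 1)) ^ m + (p * (1 - p) ^ k) ^ m)"
  proof (cases "T = {}")
    case True
    then have m0: "m = 0" using cardT finT by simp
    have "(\<Sum>X\<in>Pow U. wt p U X * (\<Prod>i\<in>I. h j i (X \<inter> Ab i))) = (1 - p) ^ k" for j
      using fj[of j] True m0 by simp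
    then show ?thesis unfolding sumQ using m0 by simp
  next
    case False
    then have sT: "(SOME v. v \<in> T) \<in> T" by (simp add: some_in_eq)
    define v0 where "v0 = (SOME v. v \<in> T)"
    have sv: "v0 \<in> T" using sT unfolding v0_def .
    have f1: "(\<Sum>X\<in>Pow U. wt p U X * (\<Prod>i\<in>I. h 1 i (X \<inter> Ab i))) = (1 - p) ^ k * (p + (1 - p) ^ (k + 1)) ^ m"
      using fj[of 1] bsv(1)[OF sv] bsv(1) unfolding v0_def[symmetric] by simp
    have f2: "(\<Sum>X\<in>Pow U. wt p U X * (\<Prod>i\<in>I. h 2 i (X \<inter> Ab i))) = (1 - p) ^ k * p ^ m"
      using fj[of 2] bsv(2)[OF sv] bsv(2) unfolding v0_def[symmetric] by simp
    have f3: "(\<Sum>X\<in>Pow U. wt p U X * (\<Prod>i\<in>I. h 3 i (X \<inter> Ab i))) = (1 - p) ^ k * (p * (1 - p) ^ k + (1 - p) ^ (k + 1)) ^ m"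
      using fj[of 3] bsv(3)[OF sv] bsv(3) unfolding v0_def[symmetric] by simp
    have f4: "(\<Sum>X\<in>Pow U. wt p U X * (\<Prod>i\<in>I. h 4 i (X \<inter> Ab i))) = (1 - p) ^ k * (p * (1 - p) ^ k) ^ m"
      using fj[of 4] bsv(4)[OF sv] bsv(4) unfolding v0_def[symmetric] by simp
    show ?thesis unfolding sumQ f1 f2 f3 f4 by (simp only: right_diff_distrib distrib_left)
  qed
  have allU: "all_edges n = U \<union> (all_edges n - U)" using Uall by auto
  have "(\<Sum>E\<in>Pow (all_edges n). wt p (all_edges n) E * of_bool (proper_star_k_separation n E k a S))
     = (\<Sum>E\<in>Pow (U \<union> (all_edges n - U)). wt p (U \<union> (all_edges n - U)) E * (Q (E \<inter> U) * (\<lambda>_. 1) (E \<inter> (all_edges n - U))))"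
    using ind allU by simp
  also have "\<dots> = (\<Sum>X\<in>Pow U. wt p U X * Q X) * (\<Sum>Y\<in>Pow (all_edges n - U). wt p (all_edges n - U) Y * 1)"
    by (rule fact2) (use finU fin_all in auto)
  also have "\<dots> = (\<Sum>X\<in>Pow U. wt p U X * Q X)" using wt_sum1[of "all_edges n - U" p] fin_all by simp
  finally show ?thesis using main unfolding m_def by simp
qed



theorem lemma3p2:
  fixes n k :: nat and p :: real
  assumes "k > 0" and "0 \<le> p" and "p \<le> 1"
  shows "gnp_expectation n p (\<lambda>E. real (U n k E)) =
    real n * real ((n - 1) choose k) * (1 - p) ^ k *
    ((p + (1 - p) ^ (k + 1)) ^ (n - k - 1)
     + (1 - p ^ (n - k - 1)) * (1 - (1 - p) ^ (k * (n - k - 1))) - 1)"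
proof -
  define m where "m = n - k - 1"
  define c where "c = (1 - p) ^ k * ((p + (1 - p) ^ (k + 1)) ^ m - p ^ m
       - (p * (1 - p) ^ k + (1 - p) ^ (k + 1)) ^ m + (p * (1 - p) ^ k) ^ m)"
  define Cands where "Cands = Sigma {..<n} (\<lambda>a. {S. S \<subseteq> {..<n} - {a} \<and> card S = k})"
  have finC: "finite Cands" unfolding Cands_def by (rule finite_SigmaI) auto
  have cardC: "card Cands = n * ((n - 1) choose k)"
  proof -
    have "card Cands = (\<Sum>a<n. card {S. S \<subseteq> {..<n} - {a} \<and> card S = k})"
      unfolding Cands_def by (rule card_SigmaI) auto
    also have "\<dots> = (\<Sum>a<n. (n - 1) choose k)"
    proof (rule sum.cong[OF refl])
      fix a assume "a \<in> {..<n}"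
      then have "card ({..<n} - {a}) = n - 1" by simp
      then show "card {S. S \<subseteq> {..<n} - {a} \<and> card S = k} = (n - 1) choose k"
        using n_subsets[of "{..<n} - {a}" k] by simp
    qed
    finally show ?thesis by simp
  qed
  have cnt: "real (U n k E) = (\<Sum>x\<in>Cands. of_bool (proper_star_k_separation n E k (fst x) (snd x)))" for E
  proof -
    have "{(a, S). proper_star_k_separation n E k a S} = Cands \<inter> {x. proper_star_k_separation n E k (fst x) (snd x)}"
      unfolding Cands_def proper_star_k_separation_def star_separation_def st_def by auto
    then show ?thesis unfolding U_def using finC by simp
  qed
  have each: "(\<Sum>E\<in>Pow (all_edges n). gnp_prob n p E * of_bool (proper_star_k_separation n E k (fst x) (snd x))) = c"
    if x: "x \<in> Cands" for x
  proof -
    obtain a S where xe: "x = (a, S)" by fastforce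
    have a: "a < n" "S \<subseteq> {..<n} - {a}" "card S = k" using x xe unfolding Cands_def by auto
    have "(\<Sum>E\<in>Pow (all_edges n). gnp_prob n p E * of_bool (proper_star_k_separation n E k a S))
       = (\<Sum>E\<in>Pow (all_edges n). wt p (all_edges n) E * of_bool (proper_star_k_separation n E k a S))"
      by (rule sum.cong[OF refl]) (simp add: gnp_wt fin_all)
    also have "\<dots> = c" unfolding c_def m_def by (rule prob_one[OF assms(1) a])
    finally show ?thesis using xe by simp
  qed
  have "gnp_expectation n p (\<lambda>E. real (U n k E)) =
      (\<Sum>E\<in>Pow (all_edges n). \<Sum>x\<in>Cands. gnp_prob n p E * of_bool (proper_star_k_separation n E k (fst x) (snd x)))"
    unfolding gnp_expectation_def cnt by (simp add: sum_distrib_left)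
  also have "\<dots> = (\<Sum>x\<in>Cands. \<Sum>E\<in>Pow (all_edges n). gnp_prob n p E * of_bool (proper_star_k_separation n E k (fst x) (snd x)))"
    by (rule sum.swap)
  also have "\<dots> = (\<Sum>x\<in>Cands. c)" by (rule sum.cong[OF refl]) (rule each)
  also have "\<dots> = real n * real ((n - 1) choose k) * c" using cardC by simp
  also have "c = (1 - p) ^ k * ((p + (1 - p) ^ (k + 1)) ^ m
     + (1 - p ^ m) * (1 - (1 - p) ^ (k * m)) - 1)"
  proof -
    have e1: "p * (1 - p) ^ k + (1 - p) ^ (k + 1) = (1 - p) ^ k" by (simp add: algebra_simps)
    have e2: "(p * (1 - p) ^ k) ^ m = p ^ m * (1 - p) ^ (k * m)" by (simp add: power_mult_distrib power_mult)
    have e3: "((1 - p) ^ k) ^ m = (1 - p) ^ (k * m)" by (simp add: power_mult)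
    show ?thesis unfolding c_def e1 e2 e3 by (simp add: algebra_simps)
  qed
  finally show ?thesis unfolding m_def by (simp add: mult.assoc)
qed

end
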